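(* Let $q$ be an odd prime power with characteristic $p$, let $1\le n\le q^2-1$, and write $n=u+vq$ with $0\le u,v\le q-1$. Define \[ \mathrm{II}=\sum_{\substack{\alpha,\beta\ge 0,\ \beta\le q-2\\ 0<\alpha+\beta\le q-1}}\ \sum_{\substack{k\ge 1,\ j\ge 0\\ k+j\le q-1\\ 2k-j\equiv\alpha+\beta\pmod{q-1}\\ q(q-1)+k-j-(\alpha+\beta q)=n}}2^{\alpha+\beta}\binom{2(q-1)-\alpha-\beta}{q-1}\binom{q-1-k}{j}(-1)^j . \] Then in $\mathbb F_p$, \[ \mathrm{II}=\sum_{\substack{0\le s\le 2\\ \max\{0,\,v-s+\frac{u+v}{q-1}\}<\alpha\le\min\{q-1,\,v-s+\frac{u+v}{q-1}+1\}}}\binom{u+v-(s+\alpha-v-1)(q-1)}{(s+2\alpha-2v)(q-1)-2(u+v)}, \] the sum being over integers $s,\alpha$ in the indicated ranges.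
   Context: For integers $m\ge 0$ and $k$, $\binom mk$ is the usual binomial coefficient, equal to $0$ unless $0\le k\le m$; integers are interpreted in $\mathbb F_p$. *)

theory Defs
  imports Complex_Main "HOL-Number_Theory.Cong"
begin

definition binom :: "int \<Rightarrow> int \<Rightarrow> int" where
  "binom m k = (if 0 \<le> k \<and> k \<le> m then int (nat m choose nat k) else 0)"

end

theory Submission
  imports Defs "HOL-Number_Theory.Number_Theory"
begin

lemma pp_dvd_choose:
  fixes p e i :: nat
  assumes "prime p" "0 < i" "i < p ^ e"
  shows "p dvd (p ^ e choose i)"
proof (rule ccontr)
  assume nd: "\<not> p dvd (p ^ e choose i)"
  have pe: "p ^ e > 0" using assms by (simp add: prime_gt_0_nat)
  obtain m where m: "p ^ e = Suc m" using pe by (cases "p^e") auto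
  obtain l where l: "i = Suc l" using assms by (cases i) auto
  have "i * (p ^ e choose i) = p ^ e * (m choose l)"
    using Suc_times_binomial[of l m] by (simp add: m l)
  hence "p ^ e dvd i * (p ^ e choose i)" by simp
  moreover have "coprime (p ^ e) (p ^ e choose i)"
    using nd assms(1) by (simp add: prime_imp_coprime coprime_power_left_iff)
  ultimately have "p ^ e dvd i" using coprime_dvd_mult_left_iff by blast
  hence "p ^ e \<le> i" using assms(2) by (simp add: dvd_imp_le)
  thus False using assms(3) by simp
qed

lemma pp_dvd_choose2:
  fixes p e a :: nat
  assumes "prime p" "e \<ge> 1" "a < p ^ e - 1"
  shows "p dvd ((p ^ e + a) choose (p ^ e - 1))"
proof -
  have "(p ^ e + a) choose (p ^ e - 1) = (\<Sum>k\<le>p^e-1. (p^e choose k) * (a choose (p^e-1 - k)))"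
    by (rule vandermonde[symmetric])
  also have "p dvd \<dots>"
  proof (rule dvd_sum)
    fix k assume k: "k \<in> {..p^e-1}"
    show "p dvd (p^e choose k) * (a choose (p^e-1 - k))"
    proof (cases "k = 0")
      case True thus ?thesis using assms(3) by (simp add: binomial_eq_0)
    next
      case False
      have "p ^ e > 0" using assms by (simp add: prime_gt_0_nat)
      hence "p dvd (p^e choose k)" using False k pp_dvd_choose[OF assms(1), of k e] by auto
      thus ?thesis by simp
    qed
  qed
  finally show ?thesis .
qed


lemma fermat2:
  fixes p e :: nat
  assumes "prime p" "odd p"
  shows "[(2::int) ^ (p ^ e - 1) = 1] (mod int p)"
proof -
  have p1: "p \<ge> 1" using prime_gt_0_nat[OF assms(1)] by simp
  have "[p - 1 + 1 = 0 + 1] (mod (p - 1))" by (intro cong_add) (simp_all add: cong_0_iff)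
  hence "[p = 1] (mod (p - 1))" using p1 by simp
  hence "[p ^ e = 1 ^ e] (mod (p - 1))" by (rule cong_pow)
  hence "(p - 1) dvd (p ^ e - 1)" unfolding power_one by (rule cong_to_1_nat)
  then obtain c where c: "p ^ e - 1 = (p - 1) * c" by blast
  have "\<not> p dvd 2"
  proof
    assume "p dvd 2"
    hence "p \<le> 2" by (simp add: dvd_imp_le)
    hence "p = 2" using prime_ge_2_nat[OF assms(1)] by simp
    thus False using assms(2) by simp
  qed
  hence "[2 ^ (p - 1) = 1] (mod p)" by (rule fermat_theorem[OF assms(1)])
  hence "[((2::nat) ^ (p - 1)) ^ c = 1 ^ c] (mod p)" by (rule cong_pow)
  hence "[(2::nat) ^ (p ^ e - 1) = 1] (mod p)" unfolding c power_mult by simp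
  hence "[int ((2::nat) ^ (p ^ e - 1)) = int 1] (mod int p)" by (simp only: cong_int_iff)
  thus ?thesis by simp
qed

lemma binom_vanish:
  fixes p e q :: nat and a b :: int
  assumes "prime p" "e \<ge> 1" "q = p ^ e" "0 \<le> a" "0 \<le> b" "0 < a + b" "a + b \<le> int q - 2"
  shows "int p dvd binom (2 * (int q - 1) - a - b) (int q - 1)"
proof -
  define c where "c = nat (int q - 2 - a - b)"
  have q2: "q \<ge> 2" using assms by linarith
  have n1: "nat (2 * (int q - 1) - a - b) = q + c" using assms(4-7) unfolding c_def by (simp add: nat_eq_iff)
  have n2: "nat (int q - 1) = q - 1" using q2 by linarith
  have "c < q - 1" using assms(4-7) unfolding c_def by linarith
  hence cl: "c < p ^ e - 1" using assms(3) by simp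
  have "p dvd ((p ^ e + c) choose (p ^ e - 1))" by (rule pp_dvd_choose2[OF assms(1,2) cl])
  hence "int p dvd int ((q + c) choose (q - 1))" using assms(3) by (simp add: int_dvd_int_iff)
  moreover have "binom (2 * (int q - 1) - a - b) (int q - 1) = int ((q + c) choose (q - 1))"
    unfolding binom_def n1 n2 using assms q2 by auto
  ultimately show ?thesis by simp
qed

lemma R_iff:
  fixes Q u v s a :: int
  assumes "Q > 0"
  shows "(max 0 (real_of_int (v - s) + real_of_int (u + v) / real_of_int Q) < real_of_int a \<and>
              real_of_int a \<le> min (real_of_int Q)
                (real_of_int (v - s) + real_of_int (u + v) / real_of_int Q + 1))
     \<longleftrightarrow> (0 < a \<and> a \<le> Q \<and> 0 \<le> u + v - (s + a - v - 1) * Q \<and> u + v - (s + a - v - 1) * Q < Q)"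
proof -
  have Qr: "real_of_int Q > 0" using assms by simp
  have e1: "real_of_int (v - s) + real_of_int (u + v) / real_of_int Q = real_of_int ((v - s) * Q + (u + v)) / real_of_int Q"
    using Qr by (simp add: field_simps)
  have i1: "real_of_int ((v - s) * Q + (u + v)) / real_of_int Q < real_of_int a \<longleftrightarrow> (v - s) * Q + (u + v) < a * Q"
    by (simp only: pos_divide_less_eq[OF Qr] of_int_mult[symmetric] of_int_less_iff)
  have i2: "real_of_int a \<le> real_of_int ((v - s) * Q + (u + v)) / real_of_int Q + 1 \<longleftrightarrow> (a - 1) * Q \<le> (v - s) * Q + (u + v)"
  proof -
    have "real_of_int a \<le> real_of_int ((v - s) * Q + (u + v)) / real_of_int Q + 1 \<longleftrightarrow> real_of_int (a - 1) \<le> real_of_int ((v - s) * Q + (u + v)) / real_of_int Q"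
      unfolding of_int_diff of_int_1 by linarith
    also have "\<dots> \<longleftrightarrow> real_of_int ((a - 1) * Q) \<le> real_of_int ((v - s) * Q + (u + v))"
      by (simp only: pos_le_divide_eq[OF Qr] of_int_mult[symmetric] of_int_le_iff)
    finally show ?thesis by linarith
  qed
  have "(v - s) * Q + (u + v) < a * Q \<longleftrightarrow> u + v - (s + a - v - 1) * Q < Q" by (simp add: algebra_simps)
  moreover have "(a - 1) * Q \<le> (v - s) * Q + (u + v) \<longleftrightarrow> 0 \<le> u + v - (s + a - v - 1) * Q" by (simp add: algebra_simps)
  ultimately show ?thesis unfolding e1 using i1 i2 by auto
qed

lemma step2:
  fixes qq u v N :: int
  assumes qq: "qq \<ge> 2" and N: "N = u + v * qq"
  shows "(\<Sum>(\<alpha>, \<beta>, k, j) \<in> {(\<alpha>::int, \<beta>::int, k::int, j::int).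
              \<alpha> \<ge> 0 \<and> \<beta> \<ge> 0 \<and> \<beta> \<le> qq - 2 \<and> 0 < \<alpha> + \<beta> \<and> \<alpha> + \<beta> \<le> qq - 1 \<and>
              k \<ge> 1 \<and> j \<ge> 0 \<and> k + j \<le> qq - 1 \<and>
              [2 * k - j = \<alpha> + \<beta>] (mod (qq - 1)) \<and>
              qq * (qq - 1) + k - j - (\<alpha> + \<beta> * qq) = N}.
            if \<alpha> + \<beta> = qq - 1 then binom (qq - 1 - k) j else 0)
         = (\<Sum>(s, \<alpha>) \<in> {(s::int, \<alpha>::int). 0 \<le> s \<and> s \<le> 2 \<and>
              max 0 (real_of_int (v - s) + real_of_int (u + v) / real_of_int (qq - 1))
                < real_of_int \<alpha> \<and>
              real_of_int \<alpha> \<le> min (real_of_int (qq - 1))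
                (real_of_int (v - s) + real_of_int (u + v) / real_of_int (qq - 1) + 1)}.
            binom (u + v - (s + \<alpha> - v - 1) * (qq - 1))
                  ((s + 2 * \<alpha> - 2 * v) * (qq - 1) - 2 * (u + v)))"
    (is "sum ?g ?S = sum ?h ?R")
proof -
  have Qp: "qq - 1 > 0" using qq by simp
  define A where "A = (\<lambda>s a. u + v - (s + a - v - 1) * (qq - 1))"
  define B where "B = (\<lambda>s a. (s + 2 * a - 2 * v) * (qq - 1) - 2 * (u + v))"
  define S0 where "S0 = {(a, b, k, j). 1 \<le> a \<and> a \<le> qq - 1 \<and> b = qq - 1 - a \<and> 1 \<le> k \<and> 0 \<le> j \<and>
      k + j \<le> qq - 1 \<and> (qq - 1) dvd (2 * k - j) \<and> a * (qq - 1) + k - j = N}"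
  define R0 where "R0 = {(s, a). 0 \<le> s \<and> s \<le> 2 \<and> 0 < a \<and> a \<le> qq - 1 \<and> 0 \<le> A s a \<and> A s a < qq - 1
      \<and> 0 \<le> B s a \<and> B s a \<le> A s a}"
  define g' where "g' = (\<lambda>(a::int, b::int, k::int, j::int). binom (qq - 1 - k) j)"
  have Rmem: "(s, a) \<in> ?R \<longleftrightarrow> 0 \<le> s \<and> s \<le> 2 \<and> 0 < a \<and> a \<le> qq - 1 \<and> 0 \<le> A s a \<and> A s a < qq - 1" for s a
    using R_iff[OF Qp, of v s u a] unfolding A_def by auto
  have finS: "finite ?S"
    by (rule finite_subset[of _ "{0..qq-1} \<times> {0..qq-1} \<times> {1..qq-1} \<times> {0..qq-1}"]) auto
  have finR: "finite ?R"
    by (rule finite_subset[of _ "{0..2} \<times> {0..qq-1}"]) (auto simp: Rmem)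
  have e1: "sum ?g ?S = sum g' S0"
  proof (rule sum.mono_neutral_cong_right[OF finS])
    show "S0 \<subseteq> ?S"
    proof
      fix x assume "x \<in> S0"
      then obtain a k j where x: "x = (a, qq - 1 - a, k, j)" and h: "1 \<le> a" "a \<le> qq - 1" "1 \<le> k" "0 \<le> j" "k + j \<le> qq - 1"
        "(qq - 1) dvd (2 * k - j)" "a * (qq - 1) + k - j = N" unfolding S0_def by auto
      have "[2 * k - j = a + (qq - 1 - a)] (mod (qq - 1))"
        using h(6) by (simp add: cong_iff_dvd_diff dvd_diff)
      moreover have "qq * (qq - 1) + k - j - (a + (qq - 1 - a) * qq) = N"
        using h(7) by (simp add: algebra_simps)
      ultimately show "x \<in> ?S" using h Qp by (simp add: x)
    qed
    show "\<forall>i\<in>?S - S0. ?g i = 0"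
    proof
      fix x assume xm: "x \<in> ?S - S0"
      then obtain a b k j where x: "x = (a, b, k, j)" and h: "0 \<le> a" "0 \<le> b" "b \<le> qq - 2" "0 < a + b" "a + b \<le> qq - 1" "1 \<le> k" "0 \<le> j"
        "k + j \<le> qq - 1" "[2 * k - j = a + b] (mod (qq - 1))" "qq * (qq - 1) + k - j - (a + b * qq) = N"
        by auto
      show "?g x = 0"
      proof (cases "a + b = qq - 1")
        case False thus ?thesis by (simp add: x)
      next
        case True
        have "(qq - 1) dvd (2 * k - j - (qq - 1))" using h(9) True by (simp add: cong_iff_dvd_diff)
        hence d: "(qq - 1) dvd (2 * k - j)" by (metis dvd_diff dvd_refl diff_add_cancel dvd_add)
        have b: "b = qq - 1 - a" using True by simp
        have "a * (qq - 1) + k - j = N" using h(10) unfolding b by (simp add: algebra_simps)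
        hence "x \<in> S0" using h d b unfolding S0_def x by simp
        thus ?thesis using xm by simp
      qed
    qed
    show "\<And>x. x \<in> S0 \<Longrightarrow> ?g x = g' x" by (auto simp: S0_def g'_def)
  qed
  have e2: "sum ?h ?R = sum ?h R0"
  proof (rule sum.mono_neutral_right[OF finR])
    show "R0 \<subseteq> ?R"
    proof
      fix y assume "y \<in> R0"
      then obtain s a where y: "y = (s, a)" and h: "0 \<le> s \<and> s \<le> 2 \<and> 0 < a \<and> a \<le> qq - 1 \<and> 0 \<le> A s a \<and> A s a < qq - 1"
        unfolding R0_def by auto
      show "y \<in> ?R" unfolding y using Rmem[of s a] h by blast
    qed
    show "\<forall>i\<in>?R - R0. ?h i = 0"
    proof
      fix y assume ym: "y \<in> ?R - R0"
      then obtain s a where y: "y = (s, a)" by (cases y) auto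
      have "(s, a) \<in> ?R" using ym y by simp
      hence h: "0 \<le> s \<and> s \<le> 2 \<and> 0 < a \<and> a \<le> qq - 1 \<and> 0 \<le> A s a \<and> A s a < qq - 1"
        using Rmem[of s a] by blast
      have "(s, a) \<notin> R0" using ym y by simp
      hence "\<not> (0 \<le> B s a \<and> B s a \<le> A s a)" using h unfolding R0_def by simp
      hence "binom (A s a) (B s a) = 0" unfolding binom_def by simp
      thus "?h y = 0" unfolding y A_def B_def by simp
    qed
  qed
  have e3: "sum g' S0 = sum ?h R0"
  proof (rule sum.reindex_bij_witness[where i = "\<lambda>(s, a). (a, qq - 1 - a, qq - 1 - A s a, B s a)"
        and j = "\<lambda>(a, b, k, j). ((2 * k - j) div (qq - 1), a)"])
    fix x assume "x \<in> S0"
    then obtain a b k j where x: "x = (a, b, k, j)" and h: "1 \<le> a" "a \<le> qq - 1" "b = qq - 1 - a" "1 \<le> k" "0 \<le> j"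
      "k + j \<le> qq - 1" "(qq - 1) dvd (2 * k - j)" "a * (qq - 1) + k - j = N"
      unfolding S0_def by auto
    obtain t where t: "2 * k - j = (qq - 1) * t" using h(7) by blast
    have td: "(2 * k - j) div (qq - 1) = t" using t Qp by simp
    have "(qq - 1) * t > (qq - 1) * (-1)" using t h by simp
    hence "- 1 < t" using mult_less_cancel_left_pos[OF Qp] by blast
    hence t0: "t \<ge> 0" by simp
    have "(qq - 1) * t \<le> (qq - 1) * 2" using t h by simp
    hence t2: "t \<le> 2" using mult_le_cancel_left_pos[OF Qp] by blast
    have f1: "t * qq = 2 * k - j + t" using t by (simp add: algebra_simps)
    have f2: "a * qq = N - k + j + a" using h(8) by (simp add: algebra_simps)
    have f3: "v * qq = N - u" using N by simp
    have "A t a = u + v - t * qq + t - a * qq + a + v * qq - v + qq - 1" unfolding A_def by (simp add: algebra_simps)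
    hence At: "A t a = qq - 1 - k" using f1 f2 f3 by linarith
    have "B t a = t * qq - t + 2 * (a * qq) - 2 * a - 2 * (v * qq) + 2 * v - 2 * u - 2 * v" unfolding B_def by (simp add: algebra_simps)
    hence Bt: "B t a = j" using f1 f2 f3 by linarith
    show "(\<lambda>(s, a). (a, qq - 1 - a, qq - 1 - A s a, B s a)) ((\<lambda>(a, b, k, j). ((2 * k - j) div (qq - 1), a)) x) = x"
      using At Bt by (simp add: x td h(3))
    show "(\<lambda>(a, b, k, j). ((2 * k - j) div (qq - 1), a)) x \<in> R0"
      using At Bt h t0 t2 by (simp add: x td R0_def)
    show "?h ((\<lambda>(a, b, k, j). ((2 * k - j) div (qq - 1), a)) x) = g' x"
    proof -
      have jx: "(\<lambda>(a, b, k, j). ((2 * k - j) div (qq - 1), a)) x = (t, a)" by (simp add: x td)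
      have "?h (t, a) = binom (A t a) (B t a)" by (simp add: A_def B_def)
      also have "\<dots> = g' x" using At Bt by (simp add: x g'_def)
      finally show ?thesis unfolding jx .
    qed
  next
    fix y assume "y \<in> R0"
    then obtain s a where y: "y = (s, a)" and h: "0 \<le> s" "s \<le> 2" "0 < a" "a \<le> qq - 1" "0 \<le> A s a" "A s a < qq - 1"
      "0 \<le> B s a" "B s a \<le> A s a"
      unfolding R0_def by auto
    have d: "2 * (qq - 1 - A s a) - B s a = (qq - 1) * s" unfolding A_def B_def by (simp add: algebra_simps)
    have n: "a * (qq - 1) + (qq - 1 - A s a) - B s a = N" unfolding A_def B_def N by (simp add: algebra_simps)
    show "(\<lambda>(a, b, k, j). ((2 * k - j) div (qq - 1), a)) ((\<lambda>(s, a). (a, qq - 1 - a, qq - 1 - A s a, B s a)) y) = y"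
      using d Qp by (simp add: y)
    show "(\<lambda>(s, a). (a, qq - 1 - a, qq - 1 - A s a, B s a)) y \<in> S0"
      using d n h by (simp add: y S0_def)
  qed
  show ?thesis using e1 e2 e3 by simp
qed

theorem lemma4p2:
  fixes p e q n :: nat and u v :: int
  assumes "prime p" and "odd p" and "e \<ge> 1" and "q = p ^ e"
    and "1 \<le> n" and "n \<le> q^2 - 1"
    and "u = int (n mod q)" and "v = int (n div q)"
  shows "[(\<Sum>(\<alpha>, \<beta>, k, j) \<in> {(\<alpha>::int, \<beta>::int, k::int, j::int).
              \<alpha> \<ge> 0 \<and> \<beta> \<ge> 0 \<and> \<beta> \<le> int q - 2 \<and> 0 < \<alpha> + \<beta> \<and> \<alpha> + \<beta> \<le> int q - 1 \<and>
              k \<ge> 1 \<and> j \<ge> 0 \<and> k + j \<le> int q - 1 \<and>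
              [2 * k - j = \<alpha> + \<beta>] (mod (int q - 1)) \<and>
              int q * (int q - 1) + k - j - (\<alpha> + \<beta> * int q) = int n}.
            2 ^ nat (\<alpha> + \<beta>) * binom (2 * (int q - 1) - \<alpha> - \<beta>) (int q - 1)
              * binom (int q - 1 - k) j * (-1) ^ nat j)
         = (\<Sum>(s, \<alpha>) \<in> {(s::int, \<alpha>::int). 0 \<le> s \<and> s \<le> 2 \<and>
              max 0 (real_of_int (v - s) + real_of_int (u + v) / real_of_int (int q - 1))
                < real_of_int \<alpha> \<and>
              real_of_int \<alpha> \<le> min (real_of_int (int q - 1))
                (real_of_int (v - s) + real_of_int (u + v) / real_of_int (int q - 1) + 1)}.
            binom (u + v - (s + \<alpha> - v - 1) * (int q - 1))
                  ((s + 2 * \<alpha> - 2 * v) * (int q - 1) - 2 * (u + v)))] (mod int p)"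
  proof -
  have p2: "p \<ge> 2" by (rule prime_ge_2_nat[OF assms(1)])
  have "p \<noteq> 2" using assms(2) by auto
  hence p3: "p \<ge> 3" using p2 by simp
  have "p ^ 1 \<le> p ^ e" by (rule power_increasing) (use assms(3) p3 in auto)
  hence qge: "q \<ge> 3" using assms(4) p3 by simp
  have oddq: "odd q" using assms(2,4) by simp
  have Qeven: "(2::int) dvd (int q - 1)" using oddq by (simp add: even_diff odd_pos)
  define S where "S = {(\<alpha>::int, \<beta>::int, k::int, j::int).
              \<alpha> \<ge> 0 \<and> \<beta> \<ge> 0 \<and> \<beta> \<le> int q - 2 \<and> 0 < \<alpha> + \<beta> \<and> \<alpha> + \<beta> \<le> int q - 1 \<and>
              k \<ge> 1 \<and> j \<ge> 0 \<and> k + j \<le> int q - 1 \<and>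
              [2 * k - j = \<alpha> + \<beta>] (mod (int q - 1)) \<and>
              int q * (int q - 1) + k - j - (\<alpha> + \<beta> * int q) = int n}"
  have c1: "[(\<Sum>(\<alpha>, \<beta>, k, j) \<in> S.
            2 ^ nat (\<alpha> + \<beta>) * binom (2 * (int q - 1) - \<alpha> - \<beta>) (int q - 1)
              * binom (int q - 1 - k) j * (-1) ^ nat j)
     = (\<Sum>(\<alpha>, \<beta>, k, j) \<in> S. if \<alpha> + \<beta> = int q - 1 then binom (int q - 1 - k) j else 0)] (mod int p)"
  proof (rule cong_sum)
    fix x assume "x \<in> S"
    then obtain a b k j where x: "x = (a, b, k, j)" and h: "0 \<le> a" "0 \<le> b" "0 < a + b" "a + b \<le> int q - 1"
        "j \<ge> 0" "[2 * k - j = a + b] (mod (int q - 1))"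
      unfolding S_def by auto
    show "[(case x of (\<alpha>, \<beta>, k, j) \<Rightarrow> 2 ^ nat (\<alpha> + \<beta>) * binom (2 * (int q - 1) - \<alpha> - \<beta>) (int q - 1)
              * binom (int q - 1 - k) j * (-1) ^ nat j) =
          (case x of (\<alpha>, \<beta>, k, j) \<Rightarrow> if \<alpha> + \<beta> = int q - 1 then binom (int q - 1 - k) j else 0)] (mod int p)"
    proof (cases "a + b = int q - 1")
      case True
      have "a + b = int (q - 1)" using True qge by simp
      hence n1: "nat (a + b) = p ^ e - 1" using assms(4) by simp
      have "[2 * k - j = a + b] (mod 2)" using h(6) Qeven True by (metis cong_dvd_modulus)
      hence "(2::int) dvd (2 * k - j - (a + b))" by (simp add: cong_iff_dvd_diff)
      hence "(2::int) dvd j" using Qeven True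
        by (metis dvd_diff dvd_triv_left diff_diff_eq2 diff_add_cancel dvd_add_right_iff)
      hence ev: "even (nat j)" using h(5) by (simp add: even_nat_iff)
      have "2 * (int q - 1) - a - b = int q - 1" using True by simp
      hence "binom (2 * (int q - 1) - a - b) (int q - 1) = binom (int q - 1) (int q - 1)" by (simp only:)
      also have "\<dots> = 1" using qge unfolding binom_def by simp
      finally have bq: "binom (2 * (int q - 1) - a - b) (int q - 1) = 1" .
      have "[2 ^ nat (a + b) * binom (2 * (int q - 1) - a - b) (int q - 1)
              * binom (int q - 1 - k) j * (-1) ^ nat j = 1 * binom (int q - 1 - k) j] (mod int p)"
        unfolding bq n1 using ev cong_mult[OF fermat2[OF assms(1,2), of e] cong_refl[of "binom (int q - 1 - k) j"]] by simp
      thus ?thesis using True by (simp add: x)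
    next
      case False
      have "int p dvd binom (2 * (int q - 1) - a - b) (int q - 1)"
        by (rule binom_vanish[OF assms(1,3,4) h(1,2,3)]) (use False h(4) in simp)
      hence "[2 ^ nat (a + b) * binom (2 * (int q - 1) - a - b) (int q - 1)
              * binom (int q - 1 - k) j * (-1) ^ nat j = 0] (mod int p)"
        by (simp add: cong_0_iff)
      thus ?thesis using False by (simp add: x)
    qed
  qed
  have nq: "int n = u + v * int q" using assms(7,8)
    by (metis mod_div_mult_eq of_nat_add of_nat_mult)
  have e2: "(\<Sum>(\<alpha>, \<beta>, k, j) \<in> S. if \<alpha> + \<beta> = int q - 1 then binom (int q - 1 - k) j else 0)
         = (\<Sum>(s, \<alpha>) \<in> {(s::int, \<alpha>::int). 0 \<le> s \<and> s \<le> 2 \<and>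
              max 0 (real_of_int (v - s) + real_of_int (u + v) / real_of_int (int q - 1))
                < real_of_int \<alpha> \<and>
              real_of_int \<alpha> \<le> min (real_of_int (int q - 1))
                (real_of_int (v - s) + real_of_int (u + v) / real_of_int (int q - 1) + 1)}.
            binom (u + v - (s + \<alpha> - v - 1) * (int q - 1))
                  ((s + 2 * \<alpha> - 2 * v) * (int q - 1) - 2 * (u + v)))"
    unfolding S_def by (rule step2) (use qge nq in auto)
  show ?thesis using c1 e2 unfolding S_def by simp
qed

end
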